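(* Let $R$ be a finite Frobenius ring, $\chi$ a generating character of $R$, $M=\{x_0=0,x_1,\ldots,x_n\}$ a finite $R$-bimodule, and $B,B'$ non-degenerate bilinear forms on $M$. Then the matrices $H=[\chi(B(x_i,x_j))]_{0\le i,j\le n}$ and $H'=[\chi(B'(x_i,x_j))]_{0\le i,j\le n}$ are equivalent by a row permutation, i.e. $H'$ is obtained from $H$ by permuting its rows.
   Context: A bilinear form on $M$ is a biadditive map $B:M\times M\to R$ with $B(rx,y)=rB(x,y)$ and $B(x,yr)=B(x,y)r$; it is non-degenerate if its left and right kernels are zero. A character of $R$ is a group homomorphism $(R,+)\to\mathbb{C}^*$; it is generating if its kernel contains no nonzero left ideal and no nonzero right ideal of $R$. *)

theory Defs
  imports Complex_Main
begin

definition left_ideal :: "'r::ring_1 set \<Rightarrow> bool" where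
  "left_ideal I \<longleftrightarrow> 0 \<in> I \<and> (\<forall>a\<in>I. \<forall>b\<in>I. a + b \<in> I) \<and> (\<forall>a\<in>I. - a \<in> I)
     \<and> (\<forall>r. \<forall>a\<in>I. r * a \<in> I)"

definition right_ideal :: "'r::ring_1 set \<Rightarrow> bool" where
  "right_ideal I \<longleftrightarrow> 0 \<in> I \<and> (\<forall>a\<in>I. \<forall>b\<in>I. a + b \<in> I) \<and> (\<forall>a\<in>I. - a \<in> I)
     \<and> (\<forall>r. \<forall>a\<in>I. a * r \<in> I)"

definition character :: "('r::ring_1 \<Rightarrow> complex) \<Rightarrow> bool" where
  "character \<chi> \<longleftrightarrow> (\<forall>a. \<chi> a \<noteq> 0) \<and> (\<forall>a b. \<chi> (a + b) = \<chi> a * \<chi> b)"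

definition generating_character :: "('r::ring_1 \<Rightarrow> complex) \<Rightarrow> bool" where
  "generating_character \<chi> \<longleftrightarrow> character \<chi> \<and>
     (\<forall>I. left_ideal I \<and> I \<subseteq> {a. \<chi> a = 1} \<longrightarrow> I = {0}) \<and>
     (\<forall>I. right_ideal I \<and> I \<subseteq> {a. \<chi> a = 1} \<longrightarrow> I = {0})"

text \<open>A finite ring is Frobenius iff it admits a generating character (Wood);
we use this characterization for finite rings.\<close>
definition finite_frobenius_ring :: "'r::ring_1 itself \<Rightarrow> bool" where
  "finite_frobenius_ring _ \<longleftrightarrow> finite (UNIV :: 'r set) \<and>
     (\<exists>\<chi> :: 'r \<Rightarrow> complex. generating_character \<chi>)"

definition bimodule :: "('r::ring_1 \<Rightarrow> 'm::ab_group_add \<Rightarrow> 'm) \<Rightarrow> ('m \<Rightarrow> 'r \<Rightarrow> 'm) \<Rightarrow> bool" where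
  "bimodule lm rm \<longleftrightarrow>
     (\<forall>r x y. lm r (x + y) = lm r x + lm r y) \<and>
     (\<forall>r s x. lm (r + s) x = lm r x + lm s x) \<and>
     (\<forall>r s x. lm (r * s) x = lm r (lm s x)) \<and>
     (\<forall>x. lm 1 x = x) \<and>
     (\<forall>r x y. rm (x + y) r = rm x r + rm y r) \<and>
     (\<forall>r s x. rm x (r + s) = rm x r + rm x s) \<and>
     (\<forall>r s x. rm x (r * s) = rm (rm x r) s) \<and>
     (\<forall>x. rm x 1 = x) \<and>
     (\<forall>r s x. rm (lm r x) s = lm r (rm x s))"

definition bilinear_form ::
  "('r::ring_1 \<Rightarrow> 'm::ab_group_add \<Rightarrow> 'm) \<Rightarrow> ('m \<Rightarrow> 'r \<Rightarrow> 'm) \<Rightarrow> ('m \<Rightarrow> 'm \<Rightarrow> 'r) \<Rightarrow> bool" where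
  "bilinear_form lm rm B \<longleftrightarrow>
     (\<forall>x x' y. B (x + x') y = B x y + B x' y) \<and>
     (\<forall>x y y'. B x (y + y') = B x y + B x y') \<and>
     (\<forall>r x y. B (lm r x) y = r * B x y) \<and>
     (\<forall>r x y. B x (rm y r) = B x y * r)"

definition nondegenerate :: "('m::ab_group_add \<Rightarrow> 'm \<Rightarrow> 'r::ring_1) \<Rightarrow> bool" where
  "nondegenerate B \<longleftrightarrow> {x. \<forall>y. B x y = 0} = {0} \<and> {y. \<forall>x. B x y = 0} = {0}"

end

theory Submission
  imports Defs
begin

lemma char_sum_zero:
  fixes f :: "'m::ab_group_add \<Rightarrow> complex"
  assumes fin: "finite (UNIV :: 'm set)" and hom: "\<And>a b. f (a + b) = f a * f b" and na: "f a \<noteq> 1"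
  shows "(\<Sum>y\<in>UNIV. f y) = 0"
proof -
  have "(\<Sum>y\<in>UNIV. f y) = (\<Sum>y\<in>UNIV. f (a + y))"
    by (rule sum.reindex_bij_witness[where i="\<lambda>y. a + y" and j="\<lambda>y. y - a"]) auto
  also have "\<dots> = f a * (\<Sum>y\<in>UNIV. f y)" by (simp add: hom sum_distrib_left)
  finally have "(1 - f a) * (\<Sum>y\<in>UNIV. f y) = 0" by (simp add: algebra_simps)
  with na show ?thesis by simp
qed

lemma chi_facts:
  assumes "character \<chi>"
  shows "\<chi> 0 = 1" "\<And>a. \<chi> a * \<chi> (- a) = 1" "\<And>a b. \<chi> (a + b) = \<chi> a * \<chi> b"
proof -
  have h: "\<And>a b. \<chi> (a + b) = \<chi> a * \<chi> b" and nz: "\<And>a. \<chi> a \<noteq> 0"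
    using assms unfolding character_def by auto
  have "\<chi> 0 = \<chi> 0 * \<chi> 0" using h[of 0 0] by simp
  with nz[of 0] show c0: "\<chi> 0 = 1" by simp
  show "\<And>a. \<chi> a * \<chi> (- a) = 1" using h c0 by (metis add.right_inverse)
  show "\<And>a b. \<chi> (a + b) = \<chi> a * \<chi> b" by (rule h)
qed

lemma bil_facts:
  assumes "bilinear_form lm rm B"
  shows "B 0 y = 0" "B x 0 = 0" "B (- x) y = - B x y" "B x (- y) = - B x y"
    "B (x + x') y = B x y + B x' y" "B x (y + y') = B x y + B x y'"
    "B (lm r x) y = r * B x y" "B x (rm y r) = B x y * r"
proof -
  have a1: "\<And>x x' y. B (x + x') y = B x y + B x' y"
   and a2: "\<And>x y y'. B x (y + y') = B x y + B x y'"
    using assms unfolding bilinear_form_def by auto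
  show "B 0 y = 0" using a1[of 0 0 y] by simp
  show "B x 0 = 0" using a2[of x 0 0] by simp
  show "B (- x) y = - B x y" using a1[of x "-x" y] a1[of 0 0 y] by (simp add: eq_neg_iff_add_eq_0 add.commute)
  show "B x (- y) = - B x y" using a2[of x y "-y"] a2[of x 0 0] by (simp add: eq_neg_iff_add_eq_0 add.commute)
  show "B (x + x') y = B x y + B x' y" "B x (y + y') = B x y + B x y'" by (rule a1, rule a2)
  show "B (lm r x) y = r * B x y" "B x (rm y r) = B x y * r"
    using assms unfolding bilinear_form_def by auto
qed

lemma ker_left:
  assumes g: "generating_character \<chi>" and b: "bilinear_form lm rm B" and nd: "nondegenerate B"
    and h: "\<And>y. \<chi> (B d y) = 1"
  shows "d = 0"
proof -
  let ?I = "range (B d)"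
  have "right_ideal ?I"
    unfolding right_ideal_def
  proof (intro conjI ballI allI)
    show "0 \<in> ?I" using bil_facts(2)[OF b] by (metis rangeI)
  next
    fix a c assume "a \<in> ?I" "c \<in> ?I"
    then obtain a' c' where "a = B d a'" "c = B d c'" by auto
    thus "a + c \<in> ?I" using bil_facts(6)[OF b, of d a' c'] by (metis rangeI)
  next
    fix a assume "a \<in> ?I"
    then obtain a' where "a = B d a'" by auto
    thus "- a \<in> ?I" using bil_facts(4)[OF b, of d a'] by (metis rangeI)
  next
    fix a r assume "a \<in> ?I"
    then obtain a' where "a = B d a'" by auto
    thus "a * r \<in> ?I" using bil_facts(8)[OF b, of d a' r] by (metis rangeI)
  qed
  moreover have "?I \<subseteq> {a. \<chi> a = 1}" using h by auto
  ultimately have "?I = {0}" using g unfolding generating_character_def by blast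
  hence "d \<in> {x. \<forall>y. B x y = 0}" by auto
  thus ?thesis using nd unfolding nondegenerate_def by auto
qed

lemma ker_right:
  assumes g: "generating_character \<chi>" and b: "bilinear_form lm rm B" and nd: "nondegenerate B"
    and h: "\<And>v. \<chi> (B v d) = 1"
  shows "d = 0"
proof -
  let ?I = "range (\<lambda>v. B v d)"
  have "left_ideal ?I"
    unfolding left_ideal_def
  proof (intro conjI ballI allI)
    show "0 \<in> ?I" using bil_facts(1)[OF b] by (metis rangeI)
  next
    fix a c assume "a \<in> ?I" "c \<in> ?I"
    then obtain a' c' where "a = B a' d" "c = B c' d" by auto
    thus "a + c \<in> ?I" using bil_facts(5)[OF b, of a' c' d] by (metis rangeI)
  next
    fix a assume "a \<in> ?I"
    then obtain a' where "a = B a' d" by auto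
    thus "- a \<in> ?I" using bil_facts(3)[OF b, of a' d] by (metis rangeI)
  next
    fix a r assume "a \<in> ?I"
    then obtain a' where "a = B a' d" by auto
    thus "r * a \<in> ?I" using bil_facts(7)[OF b, of r a' d] by (metis rangeI)
  qed
  moreover have "?I \<subseteq> {a. \<chi> a = 1}" using h by auto
  ultimately have "?I = {0}" using g unfolding generating_character_def by blast
  hence "d \<in> {y. \<forall>x. B x y = 0}" by auto
  thus ?thesis using nd unfolding nondegenerate_def by auto
qed

lemma exists_rep:
  fixes \<psi> :: "'m::ab_group_add \<Rightarrow> complex"
  assumes g: "generating_character \<chi>" and b: "bilinear_form lm rm B" and nd: "nondegenerate B"
    and fin: "finite (UNIV :: 'm set)"
    and hom: "\<And>a b. \<psi> (a + b) = \<psi> a * \<psi> b" and p0: "\<psi> 0 = 1"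
  shows "\<exists>v. \<forall>y. \<psi> y = \<chi> (B v y)"
proof (rule ccontr)
  assume nex: "\<not> ?thesis"
  have ch: "character \<chi>" using g unfolding generating_character_def by auto
  note cf = chi_facts[OF ch]
  note bf = bil_facts[OF b]
  have inner: "(\<Sum>y\<in>UNIV. \<psi> y * \<chi> (B v (- y))) = 0" for v
  proof -
    obtain y where y: "\<psi> y \<noteq> \<chi> (B v y)" using nex by auto
    have "\<psi> y * \<chi> (B v (- y)) \<noteq> 1"
    proof
      assume "\<psi> y * \<chi> (B v (- y)) = 1"
      hence "\<psi> y * \<chi> (B v (- y)) * \<chi> (B v y) = \<chi> (B v y)" by simp
      moreover have "\<chi> (B v (- y)) * \<chi> (B v y) = 1" using cf(2)[of "B v y"] bf(4)
        by (simp add: mult.commute)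
      ultimately show False using y by (simp add: mult.assoc)
    qed
    moreover have "\<psi> (a + c) * \<chi> (B v (- (a + c))) = \<psi> a * \<chi> (B v (- a)) * (\<psi> c * \<chi> (B v (- c)))" for a c
    proof -
      have "- (a + c) = - a + - c" by simp
      hence "\<chi> (B v (- (a + c))) = \<chi> (B v (- a)) * \<chi> (B v (- c))"
        using bf(6) cf(3) by metis
      thus ?thesis by (simp add: hom)
    qed
    ultimately show ?thesis
      using char_sum_zero[OF fin, of "\<lambda>y. \<psi> y * \<chi> (B v (- y))"] by blast
  qed
  have "(\<Sum>v\<in>UNIV. \<Sum>y\<in>UNIV. \<psi> y * \<chi> (B v (- y))) = 0" using inner by simp
  moreover have "(\<Sum>v\<in>UNIV. \<Sum>y\<in>UNIV. \<psi> y * \<chi> (B v (- y)))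
      = (\<Sum>y\<in>UNIV. \<psi> y * (\<Sum>v\<in>UNIV. \<chi> (B v (- y))))"
    by (subst sum.swap) (simp add: sum_distrib_left)
  moreover have "(\<Sum>v\<in>UNIV. \<chi> (B v (- y))) = (if y = 0 then of_nat (card (UNIV :: 'm set)) else 0)" for y
  proof (cases "y = 0")
    case True thus ?thesis by (simp add: bf(2) cf(1))
  next
    case False
    hence "- y \<noteq> 0" by simp
    then obtain v where "\<chi> (B v (- y)) \<noteq> 1" using ker_right[OF g b nd, of "- y"] by blast
    moreover have "\<chi> (B (a + c) (- y)) = \<chi> (B a (- y)) * \<chi> (B c (- y))" for a c
      by (simp add: bf(5) cf(3))
    ultimately show ?thesis using False char_sum_zero[OF fin, of "\<lambda>v. \<chi> (B v (- y))"] by auto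
  qed
  ultimately have "(\<Sum>y\<in>UNIV. \<psi> y * (if y = 0 then of_nat (card (UNIV :: 'm set)) else 0)) = 0"
    by simp
  hence "\<psi> 0 * of_nat (card (UNIV :: 'm set)) = 0"
    by (simp add: if_distrib sum.delta fin cong: if_cong)
  moreover have "card (UNIV :: 'm set) > 0" using fin by (simp add: card_gt_0_iff)
  ultimately show False using p0 by simp
qed

theorem propositionA2:
  fixes \<chi> :: "'r::ring_1 \<Rightarrow> complex"
    and lm :: "'r \<Rightarrow> 'm::ab_group_add \<Rightarrow> 'm" and rm :: "'m \<Rightarrow> 'r \<Rightarrow> 'm"
    and B B' :: "'m \<Rightarrow> 'm \<Rightarrow> 'r"
    and x :: "nat \<Rightarrow> 'm" and n :: nat
  assumes "finite_frobenius_ring TYPE('r)"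
    and "generating_character \<chi>"
    and "finite (UNIV :: 'm set)"
    and "bimodule lm rm"
    and "bij_betw x {0..n} (UNIV :: 'm set)" and "x 0 = 0"
    and "bilinear_form lm rm B" and "nondegenerate B"
    and "bilinear_form lm rm B'" and "nondegenerate B'"
  shows "\<exists>\<sigma>. bij_betw \<sigma> {0..n} {0..n} \<and>
           (\<forall>i\<in>{0..n}. \<forall>j\<in>{0..n}. \<chi> (B' (x i) (x j)) = \<chi> (B (x (\<sigma> i)) (x j)))"
proof -
  note g = assms(2) and fin = assms(3) and bx = assms(5)
  have ch: "character \<chi>" using g unfolding generating_character_def by auto
  note cf = chi_facts[OF ch]
  note bf' = bil_facts[OF assms(9)]
  have "\<forall>u. \<exists>v. \<forall>y. \<chi> (B' u y) = \<chi> (B v y)"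
  proof
    fix u
    show "\<exists>v. \<forall>y. \<chi> (B' u y) = \<chi> (B v y)"
      by (rule exists_rep[OF g assms(7,8) fin]) (simp_all add: bf'(6) bf'(2) cf(3) cf(1))
  qed
  then obtain f where f: "\<And>u y. \<chi> (B' u y) = \<chi> (B (f u) y)" by metis
  have "inj f"
  proof (rule injI)
    fix u1 u2 assume eq: "f u1 = f u2"
    have "\<chi> (B' (u1 - u2) y) = 1" for y
    proof -
      have "\<chi> (B' (u1 - u2) y) = \<chi> (B' u1 y) * \<chi> (- B' u2 y)"
        using bf'(5)[of u1 "- u2" y] bf'(3)[of u2 y] cf(3)[of "B' u1 y" "- B' u2 y"] by simp
      also have "\<dots> = \<chi> (B' u2 y) * \<chi> (- B' u2 y)" using f eq by metis
      also have "\<dots> = 1" by (rule cf(2))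
      finally show ?thesis .
    qed
    hence "u1 - u2 = 0" using ker_left[OF g assms(9,10)] by blast
    thus "u1 = u2" by simp
  qed
  hence bf: "bij f" using fin by (simp add: bij_def finite_UNIV_inj_surj)
  define \<sigma> where "\<sigma> = the_inv_into {0..n} x \<circ> (f \<circ> x)"
  have "bij_betw \<sigma> {0..n} {0..n}"
    unfolding \<sigma>_def
    by (rule bij_betw_trans[OF bij_betw_trans[OF bx bf] bij_betw_the_inv_into[OF bx]])
  moreover have "x (\<sigma> i) = f (x i)" for i
    unfolding \<sigma>_def using f_the_inv_into_f_bij_betw[OF bx] by simp
  ultimately show ?thesis using f by auto
qed

end
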